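(* Let $E$ be a finite-dimensional normed real vector space with its Borel $\sigma$-algebra, and $\mu$ a Lebesgue measure on $E$. Let $s\subseteq E$ be Borel-measurable, $f:E\to E$ injective on $s$, and for each $x\in E$ let $f'(x):E\to E$ be a continuous linear map that, for every $x\in s$, is a derivative of $f$ at $x$ along $s$. Then the function $x\mapsto|\det f'(x)|$ agrees $\mu$-almost everywhere on $s$ with a Borel-measurable function, and $$\mu(f(s))=\int_s |\det f'(x)|\,d\mu(x)$$ (as an equality in $[0,\infty]$, the right side being the lower Lebesgue integral of the nonnegative function).
   Context: A Lebesgue measure on a finite-dimensional real normed vector space $E$ is a Borel measure that is invariant under translations, finite on compact sets, and positive on nonempty open sets. A continuous linear map $A:E\to E$ is a derivative of $f$ at $x$ along a set $s$ if $f(y)=f(x)+A(y-x)+o(\|y-x\|)$ as $y\to x$ with $y\in s$. *)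

theory Defs
  imports "HOL-Analysis.Analysis"
begin

definition fin_dim_space :: "'a::real_vector itself \<Rightarrow> bool" where
  "fin_dim_space _ \<longleftrightarrow> (\<exists>B. finite B \<and> span B = (UNIV :: 'a set))"

definition is_lebesgue_measure :: "'a::real_normed_vector measure \<Rightarrow> bool" where
  "is_lebesgue_measure M \<longleftrightarrow>
     sets M = sets borel \<and>
     (\<forall>a A. A \<in> sets borel \<longrightarrow> emeasure M ((\<lambda>x. a + x) ` A) = emeasure M A) \<and>
     (\<forall>K. compact K \<longrightarrow> emeasure M K < \<infinity>) \<and>
     (\<forall>U. open U \<and> U \<noteq> {} \<longrightarrow> 0 < emeasure M U)"

definition lin_det :: "('a::real_vector \<Rightarrow> 'a) \<Rightarrow> real" where
  "lin_det f = (let B = (SOME B. independent B \<and> span B = (UNIV :: 'a set)) in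
     \<Sum>p\<in>{p. p permutes B}. of_int (sign p) * (\<Prod>b\<in>B. representation B (f b) (p b)))"

end

theory Submission
  imports Defs
begin


lemma haar_translate_distr:
  fixes M :: "'b::euclidean_space measure"
  assumes sets: "sets M = sets borel"
   and inv: "\<And>a A. A \<in> sets borel \<Longrightarrow> emeasure M ((\<lambda>x. a + x) ` A) = emeasure M A"
  shows "distr M borel (\<lambda>x. x + c) = M"
proof (rule measure_eqI)
  show "sets (distr M borel (\<lambda>x. x + c)) = sets M" using sets by simp
  fix A assume A: "A \<in> sets (distr M borel (\<lambda>x. x + c))"
  then have Ab: "A \<in> sets borel" by simp
  have sp: "space M = UNIV" using sets_eq_imp_space_eq[OF sets] by simp
  have meas: "(\<lambda>x. x + c) \<in> M \<rightarrow>\<^sub>M borel"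
    by (subst measurable_cong_sets[OF sets refl]) simp
  have eq: "(\<lambda>x. x + c) -` A \<inter> space M = (\<lambda>x. (-c) + x) ` A"
    unfolding sp by (auto simp: image_iff intro!: bexI[of _ "_ + c"])
  show "emeasure (distr M borel (\<lambda>x. x + c)) A = emeasure M A"
    using emeasure_distr[OF meas Ab] eq inv[OF Ab, of "-c"] by (simp del: uminus_add_conv_diff)
qed

lemma haar_sigma_finite:
  fixes M :: "'b::euclidean_space measure"
  assumes sets: "sets M = sets borel"
   and fin: "\<And>K. compact K \<Longrightarrow> emeasure M K < \<infinity>"
  shows "sigma_finite_measure M"
proof
  have sp: "space M = UNIV" using sets_eq_imp_space_eq[OF sets] by simp
  show "\<exists>A. countable A \<and> A \<subseteq> sets M \<and> \<Union> A = space M \<and> (\<forall>a\<in>A. emeasure M a \<noteq> \<infinity>)"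
    apply (rule exI[of _ "range (\<lambda>n::nat. cball (0::'b) (real n))"])
    apply (auto simp: sp sets)
     apply (metis mem_cball_0 real_arch_simple)
    using fin[OF compact_cball] by (metis infinity_ennreal_def less_irrefl)
qed

lemma haar_unique:
  fixes M :: "'b::euclidean_space measure"
  assumes sets: "sets M = sets borel"
   and inv: "\<And>a A. A \<in> sets borel \<Longrightarrow> emeasure M ((\<lambda>x. a + x) ` A) = emeasure M A"
   and fin: "\<And>K. compact K \<Longrightarrow> emeasure M K < \<infinity>"
   and A: "A \<in> sets borel" and B: "B \<in> sets borel"
  shows "emeasure M A * emeasure lborel B = emeasure M B * emeasure lborel A"
proof -
  interpret M: sigma_finite_measure M by (rule haar_sigma_finite[OF sets fin])
  interpret P: pair_sigma_finite M lborel by unfold_locales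
  have sp: "space M = UNIV" using sets_eq_imp_space_eq[OF sets] by simp
  have Mb[measurable_cong]: "sets (M \<Otimes>\<^sub>M lborel) = sets (borel \<Otimes>\<^sub>M borel)"
    using sets by (intro sets_pair_measure_cong) auto
  note [measurable] = A B
  have m1: "(\<lambda>(x,y). indicator A x * indicator B (x + y) :: ennreal) \<in> borel_measurable (M \<Otimes>\<^sub>M lborel)"
    by measurable
  have m2: "(\<lambda>(x,y). indicator A (y - x) * indicator B y :: ennreal) \<in> borel_measurable (lborel \<Otimes>\<^sub>M M)"
  proof -
    have "sets (lborel \<Otimes>\<^sub>M M) = sets (borel \<Otimes>\<^sub>M borel)"
      using sets by (intro sets_pair_measure_cong) auto
    moreover have "(\<lambda>(x,y). indicator A (y - x) * indicator B y :: ennreal) \<in> borel_measurable (borel \<Otimes>\<^sub>M (borel::'b measure))"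
      by measurable
    ultimately show ?thesis using measurable_cong_sets by blast
  qed
  interpret P2: pair_sigma_finite lborel M by unfold_locales
  have "emeasure M A * emeasure lborel B = (\<integral>\<^sup>+x. indicator A x * emeasure lborel B \<partial>M)"
    using A sets by (simp add: nn_integral_multc measurable_cong_sets[OF sets refl])
  also have "\<dots> = (\<integral>\<^sup>+x. (\<integral>\<^sup>+y. indicator A x * indicator B (x + y) \<partial>lborel) \<partial>M)"
  proof (rule nn_integral_cong)
    fix x
    have "(\<integral>\<^sup>+y. indicator B (x + y) \<partial>lborel) = (\<integral>\<^sup>+y. indicator B y \<partial>distr lborel borel ((+) x))"
      by (subst nn_integral_distr) auto
    also have "\<dots> = emeasure lborel B" using B by (simp add: lborel_distr_plus)
    finally show "indicator A x * emeasure lborel B = (\<integral>\<^sup>+y. indicator A x * indicator B (x + y) \<partial>lborel)"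
      by (simp add: nn_integral_cmult)
  qed
  also have "\<dots> = (\<integral>\<^sup>+y. (\<integral>\<^sup>+x. indicator A x * indicator B (x + y) \<partial>M) \<partial>lborel)"
    using P.Fubini'[of "\<lambda>x y. indicator A x * indicator B (x + y)"] m1 by simp
  also have "\<dots> = (\<integral>\<^sup>+y. (\<integral>\<^sup>+x. indicator A (x - y) * indicator B x \<partial>M) \<partial>lborel)"
  proof (rule nn_integral_cong)
    fix y :: 'b
    have "(\<integral>\<^sup>+x. indicator A (x - y) * indicator B x \<partial>M)
       = (\<integral>\<^sup>+x. indicator A (x - y) * indicator B x \<partial>distr M borel (\<lambda>x. x + y))"
      by (simp add: haar_translate_distr[OF sets inv])
    also have "\<dots> = (\<integral>\<^sup>+x. indicator A x * indicator B (x + y) \<partial>M)"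
      by (subst nn_integral_distr) (auto simp: measurable_cong_sets[OF sets refl] add.commute)
    finally show "(\<integral>\<^sup>+x. indicator A x * indicator B (x + y) \<partial>M) = (\<integral>\<^sup>+x. indicator A (x - y) * indicator B x \<partial>M)"
      by simp
  qed
  also have "\<dots> = (\<integral>\<^sup>+x. (\<integral>\<^sup>+y. indicator A (x - y) * indicator B x \<partial>lborel) \<partial>M)"
    using P2.Fubini'[of "\<lambda>y x. indicator A (x - y) * indicator B x"] m2 by simp
  also have "\<dots> = (\<integral>\<^sup>+x. indicator B x * emeasure lborel A \<partial>M)"
  proof (rule nn_integral_cong)
    fix x :: 'b
    have d: "distr lborel borel (\<lambda>y. x - y) = (lborel :: 'b measure)"
    proof -
      have "lborel = density (distr lborel borel (\<lambda>y. x + (-1::real) *\<^sub>R y)) (\<lambda>_. \<bar>-1::real\<bar>^DIM('b))"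
        by (rule lborel_affine) simp
      then show ?thesis by (simp add: density_1)
    qed
    have "(\<integral>\<^sup>+y. indicator A (x - y) \<partial>lborel) = (\<integral>\<^sup>+y. indicator A y \<partial>distr lborel borel (\<lambda>y. x - y))"
      by (subst nn_integral_distr) auto
    also have "\<dots> = emeasure lborel A" using A d by simp
    finally show "(\<integral>\<^sup>+y. indicator A (x - y) * indicator B x \<partial>lborel) = indicator B x * emeasure lborel A"
      by (simp add: nn_integral_cmult mult.commute)
  qed
  also have "\<dots> = emeasure M B * emeasure lborel A"
    using B sets by (simp add: nn_integral_multc measurable_cong_sets[OF sets refl])
  finally show ?thesis .
qed



definition bas :: "'a::real_vector set" where
  "bas = (SOME B. independent B \<and> span B = (UNIV :: 'a set))"

lemma bas: "independent (bas::'a::real_vector set) \<and> span (bas::'a set) = UNIV"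
proof -
  obtain B :: "'a set" where "independent B" "UNIV \<subseteq> span B"
    using real_vector.basis_exists[of "UNIV::'a set"] by blast
  then have "\<exists>B::'a set. independent B \<and> span B = UNIV" by auto
  then show ?thesis unfolding bas_def by (rule someI_ex)
qed

lemma lin_det_bas:
  "lin_det f = (\<Sum>p\<in>{p. p permutes bas}. of_int (sign p) * (\<Prod>b\<in>bas. representation bas (f b) (p b)))"
  by (simp add: lin_det_def bas_def Let_def)

lemma bas_finite:
  assumes "fin_dim_space TYPE('a::real_vector)"
  shows "finite (bas::'a set)"
proof -
  obtain T :: "'a set" where "finite T" "span T = UNIV"
    using assms unfolding fin_dim_space_def by blast
  then show ?thesis using real_vector.independent_span_bound[of T bas] bas by auto
qed

typedef (overloaded) ('a::real_vector) idx = "{..< max 1 (card (bas::'a set))}"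
  by (rule exI[of _ 0]) auto

instantiation idx :: (real_vector) linorder
begin
definition less_eq_idx :: "'a idx \<Rightarrow> 'a idx \<Rightarrow> bool" where "less_eq_idx x y \<longleftrightarrow> Rep_idx x \<le> Rep_idx y"
definition less_idx :: "'a idx \<Rightarrow> 'a idx \<Rightarrow> bool" where "less_idx x y \<longleftrightarrow> Rep_idx x < Rep_idx y"
instance
  by standard (auto simp: less_eq_idx_def less_idx_def Rep_idx_inject)
end

instance idx :: (real_vector) wellorder
proof
  fix P :: "'a idx \<Rightarrow> bool" and a
  assume H: "\<And>x. (\<And>y. y < x \<Longrightarrow> P y) \<Longrightarrow> P x"
  show "P a"
    by (induct a rule: measure_induct_rule[of Rep_idx]) (rule H, simp add: less_idx_def)
qed

instance idx :: (real_vector) finite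
proof
  have "(UNIV :: 'a idx set) = Abs_idx ` {..< max 1 (card (bas::'a set))}"
    using type_definition.Abs_image[OF type_definition_idx] by (metis (no_types))
  then show "finite (UNIV :: 'a idx set)" by (metis finite_imageI finite_lessThan)
qed

lemma card_idx: "CARD('a::real_vector idx) = max 1 (card (bas::'a set))"
  using type_definition.card[OF type_definition_idx] by simp

lemma det_conj:
  fixes B :: "'a::real_vector set" and e :: "'n::finite \<Rightarrow> 'a" and A :: "'a \<Rightarrow> 'a"
  assumes B: "independent B" "span B = UNIV" "finite B"
    and e: "bij_betw e UNIV B"
  shows "det (matrix (\<lambda>x. (\<chi> i. representation B (A (\<Sum>k\<in>UNIV. (x $ k) *\<^sub>R e k)) (e i)) :: real^'n))
    = (\<Sum>p\<in>{p. p permutes B}. of_int (sign p) * (\<Prod>b\<in>B. representation B (A b) (p b)))"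
proof -
  define e' where "e' = inv_into UNIV e"
  have e'e[simp]: "e' (e i) = i" for i
    using e unfolding e'_def bij_betw_def by (simp add: inv_into_f_f)
  have ee'[simp]: "b \<in> B \<Longrightarrow> e (e' b) = b" for b
    using e unfolding e'_def bij_betw_def by (simp add: f_inv_into_f)
  have eB[simp]: "e i \<in> B" for i using e unfolding bij_betw_def by auto
  have Lax: "(\<Sum>k\<in>UNIV. (axis j 1 $ k) *\<^sub>R e k) = e j" for j
  proof -
    have "(\<Sum>k\<in>UNIV. (axis j 1 $ k) *\<^sub>R e k) = (\<Sum>k\<in>UNIV. if k = j then e k else 0)"
      by (rule sum.cong) (auto simp: axis_def)
    then show ?thesis by simp
  qed
  let ?M = "matrix (\<lambda>x. (\<chi> i. representation B (A (\<Sum>k\<in>UNIV. (x $ k) *\<^sub>R e k)) (e i)) :: real^'n)"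
  have Mij: "?M $ i $ j = representation B (A (e j)) (e i)" for i j
    by (simp add: matrix_def Lax)
  have "det ?M = det (transpose ?M)" by simp
  also have "\<dots> = (\<Sum>p\<in>{p. p permutes (UNIV::'n set)}. of_int (sign p) * (\<Prod>i\<in>UNIV. representation B (A (e i)) (e (p i))))"
    unfolding det_def by (simp add: transpose_def Mij)
  also have "\<dots> = (\<Sum>p\<in>{p. p permutes B}. of_int (sign p) * (\<Prod>b\<in>B. representation B (A b) (p b)))"
  proof (rule sum.reindex_bij_witness[where j = "\<lambda>p x. if x \<in> B then e (p (e' x)) else x"
        and i = "\<lambda>q x. e' (q (e x))"])
    fix p :: "'n \<Rightarrow> 'n" assume p: "p \<in> {p. p permutes UNIV}"
    show "(\<lambda>x. e' (if e x \<in> B then e (p (e' (e x))) else e x)) = p" by simp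
    interpret pb: permutes_bij_finite p UNIV B e e' "\<lambda>x. if x \<in> B then e (p (e' x)) else x"
      apply unfold_locales using p e by simp_all
    show "(\<lambda>x. if x \<in> B then e (p (e' x)) else x) \<in> {p. p permutes B}"
      using pb.permutes_p' by simp
    have "(\<Prod>b\<in>B. representation B (A b) (if b \<in> B then e (p (e' b)) else b))
        = (\<Prod>i\<in>UNIV. representation B (A (e i)) (e (p i)))"
      using prod.reindex_bij_betw[OF e, of "\<lambda>b. representation B (A b) (if b \<in> B then e (p (e' b)) else b)"]
      by simp
    then show "of_int (sign (\<lambda>x. if x \<in> B then e (p (e' x)) else x)) *
        (\<Prod>b\<in>B. representation B (A b) ((if b \<in> B then e (p (e' b)) else b)))
       = of_int (sign p) * (\<Prod>i\<in>UNIV. representation B (A (e i)) (e (p i)))"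
      using pb.sign_p' by simp
  next
    fix q :: "'a \<Rightarrow> 'a" assume q: "q \<in> {p. p permutes B}"
    then have qB: "x \<in> B \<Longrightarrow> q x \<in> B" "x \<notin> B \<Longrightarrow> q x = x" for x
      by (auto simp: permutes_in_image permutes_not_in)
    show "(\<lambda>x. if x \<in> B then e (e' (q (e (e' x)))) else x) = q"
      using qB by (auto simp: fun_eq_iff)
    have "bij_betw (\<lambda>x. e' (q (e x))) UNIV UNIV"
    proof -
      have "bij_betw q B B" using q permutes_imp_bij by auto
      moreover have "bij_betw e' B UNIV"
        using e unfolding e'_def by (simp add: bij_betw_inv_into)
      ultimately have "bij_betw (e' \<circ> (q \<circ> e)) UNIV UNIV"
        by (intro bij_betw_trans[OF bij_betw_trans[OF e]])
      then show ?thesis by (simp add: comp_def)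
    qed
    then show "(\<lambda>x. e' (q (e x))) \<in> {p. p permutes UNIV}"
      using bij_imp_permutes[of "\<lambda>x. e' (q (e x))" UNIV] by simp
  qed
  finally show ?thesis .
qed



lemma det_ae_borel:
  fixes g :: "real^'n::{finite,wellorder} \<Rightarrow> real^'n::_"
  assumes S: "S \<in> sets lebesgue"
    and der: "\<And>x. x \<in> S \<Longrightarrow> (g has_derivative g' x) (at x within S)"
  shows "(\<lambda>x. if x \<in> S then \<bar>det (matrix (g' x))\<bar> else 0) \<in> borel_measurable lebesgue"
proof -
  have "(\<lambda>x. det (matrix (g' x))) \<in> borel_measurable (lebesgue_on S)"
    by (rule borel_measurable_det_Jacobian[OF S der])
  then have "(\<lambda>x. \<bar>det (matrix (g' x))\<bar>) \<in> borel_measurable (lebesgue_on S)"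
    by measurable
  then show ?thesis by (rule borel_measurable_if[OF S, THEN iffD2])
qed

lemma cov_nn:
  fixes g :: "real^'n::{finite,wellorder} \<Rightarrow> real^'n::_"
  assumes S: "S \<in> sets lebesgue"
    and der: "\<And>x. x \<in> S \<Longrightarrow> (g has_derivative g' x) (at x within S)"
    and inj: "inj_on g S"
  shows "g ` S \<in> sets lebesgue \<and>
    emeasure lebesgue (g ` S) = (\<integral>\<^sup>+x. ennreal \<bar>det (matrix (g' x))\<bar> * indicator S x \<partial>lborel)"
proof -
  let ?h = "\<lambda>x. \<bar>det (matrix (g' x))\<bar>"
  have gS: "g ` S \<in> sets lebesgue"
  proof (rule differentiable_image_in_sets_lebesgue[OF S])
    show "g differentiable_on S"
      using der unfolding differentiable_on_def differentiable_def by blast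
  qed simp
  show ?thesis
  proof (cases "?h integrable_on S")
    case True
    then have hi: "(?h has_integral integral S ?h) S" by (simp add: integrable_integral)
    then have "g ` S \<in> lmeasurable \<and> measure lebesgue (g ` S) = integral S ?h"
      using has_measure_differentiable_image[OF S der inj] by blast
    then have "emeasure lebesgue (g ` S) = ennreal (integral S ?h)"
      by (simp add: emeasure_eq_measure2)
    moreover have "(\<integral>\<^sup>+x. ennreal (?h x) * indicator S x \<partial>lborel) = ennreal (integral S ?h)"
      by (rule nn_integral_has_integral_lebesgue'[OF _ hi]) simp
    ultimately show ?thesis using gS by simp
  next
    case False
    have "g ` S \<notin> lmeasurable"
    proof
      assume "g ` S \<in> lmeasurable"
      then have "((\<lambda>x. \<bar>det (matrix (g' x))\<bar>) has_integral measure lebesgue (g ` S)) S"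
        using has_measure_differentiable_image[OF S der inj] by blast
      then show False using False by blast
    qed
    then have inf: "emeasure lebesgue (g ` S) = \<infinity>"
      using gS unfolding fmeasurable_def by (simp add: less_top[symmetric])
    let ?F = "\<lambda>x. if x \<in> S then ?h x else 0"
    have Fm: "?F \<in> borel_measurable lebesgue" by (rule det_ae_borel[OF S der])
    obtain F' where F'[measurable]: "F' \<in> borel_measurable lborel" and ae: "AE x in lborel. ?F x = F' x"
      using completion_ex_borel_measurable_real[OF Fm] by blast
    have eq1: "(\<integral>\<^sup>+x. ennreal (?h x) * indicator S x \<partial>lborel) = (\<integral>\<^sup>+x. ennreal \<bar>F' x\<bar> \<partial>lborel)"
      by (rule nn_integral_cong_AE) (use ae in \<open>auto simp: indicator_def\<close>)
    have "(\<integral>\<^sup>+x. ennreal \<bar>F' x\<bar> \<partial>lborel) = \<infinity>"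
    proof (rule ccontr)
      assume "(\<integral>\<^sup>+x. ennreal \<bar>F' x\<bar> \<partial>lborel) \<noteq> \<infinity>"
      then obtain r where r: "(\<integral>\<^sup>+x. ennreal \<bar>F' x\<bar> \<partial>lborel) = ennreal r" "0 \<le> r"
        by (cases "(\<integral>\<^sup>+x. ennreal \<bar>F' x\<bar> \<partial>lborel)" rule: ennreal_cases) auto
      have "((\<lambda>x. \<bar>F' x\<bar>) has_integral r) UNIV"
        by (rule nn_integral_has_integral) (use r in auto)
      moreover have aeF: "AE x in lborel. x \<in> UNIV \<longrightarrow> \<bar>F' x\<bar> = ?F x"
        using ae by eventually_elim (metis (no_types, lifting) abs_abs abs_zero)
      ultimately have "(?F has_integral r) UNIV"
        using has_integral_AE[OF aeF] by simp
      then have "(?h has_integral r) S"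
        by (subst has_integral_restrict_UNIV[symmetric])
      then have "?h integrable_on S" by (rule has_integral_integrable)
      then show False using False by simp
    qed
    with eq1 inf gS show ?thesis by simp
  qed
qed



locale iso =
  fixes B :: "'a::real_normed_vector set" and e :: "'n::finite \<Rightarrow> 'a"
  assumes indep: "independent B" and spanB: "span B = UNIV" and finB: "finite B"
    and bij: "bij_betw e UNIV B"
begin

definition L :: "real^'n \<Rightarrow> 'a" where "L x = (\<Sum>k\<in>UNIV. (x $ k) *\<^sub>R e k)"
definition R :: "'a \<Rightarrow> real^'n" where "R v = (\<chi> i. representation B v (e i))"

lemma eB[simp]: "e i \<in> B" using bij unfolding bij_betw_def by auto
lemma e_inj[simp]: "e i = e j \<longleftrightarrow> i = j" using bij unfolding bij_betw_def inj_on_def by auto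
lemma inB[simp]: "v \<in> span B" using spanB by simp

lemma R_L[simp]: "R (L x) = x"
proof -
  have "representation B (L x) (e j) = x $ j" for j
  proof -
    have "representation B (L x) (e j) = (\<Sum>k\<in>UNIV. representation B ((x $ k) *\<^sub>R e k) (e j))"
      unfolding L_def by (simp add: real_vector.representation_sum[OF indep])
    also have "\<dots> = (\<Sum>k\<in>UNIV. x $ k * (if e j = e k then 1 else 0))"
      by (simp add: real_vector.representation_scale[OF indep] real_vector.representation_basis[OF indep])
    also have "\<dots> = x $ j" by (simp add: if_distrib cong: if_cong)
    finally show ?thesis .
  qed
  then show ?thesis unfolding R_def by (simp add: vec_eq_iff)
qed

lemma L_R[simp]: "L (R v) = v"
proof -
  have "L (R v) = (\<Sum>k\<in>UNIV. representation B v (e k) *\<^sub>R e k)"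
    unfolding L_def R_def by simp
  also have "\<dots> = (\<Sum>b\<in>B. representation B v b *\<^sub>R b)"
    using sum.reindex_bij_betw[OF bij, of "\<lambda>b. representation B v b *\<^sub>R b"] by simp
  also have "\<dots> = v" by (rule real_vector.sum_representation_eq[OF indep inB finB order_refl])
  finally show ?thesis .
qed

lemma L_bl: "bounded_linear L"
  unfolding L_def
  by (intro bounded_linear_sum bounded_linear_compose[OF bounded_linear_scaleR_left] bounded_linear_vec_nth)

lemma L_add: "L (x + y) = L x + L y" using L_bl by (simp add: linear_simps)
lemma L_scale: "L (r *\<^sub>R x) = r *\<^sub>R L x" using L_bl by (simp add: linear_simps)
lemma L_cont: "continuous_on UNIV L" using L_bl by (simp add: linear_continuous_on)

lemma R_add: "R (x + y) = R x + R y"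
  by (metis L_R L_add R_L)
lemma R_scale: "R (r *\<^sub>R x) = r *\<^sub>R R x"
  by (metis L_R L_scale R_L)

lemma L_below: "\<exists>m>0. \<forall>x. m * norm x \<le> norm (L x)"
proof -
  have "\<exists>x\<in>sphere (0::real^'n) 1. \<forall>y\<in>sphere 0 1. norm (L x) \<le> norm (L y)"
  proof (rule continuous_attains_inf)
    show "compact (sphere (0::real^'n) 1)" by simp
    have "axis undefined 1 \<in> sphere (0::real^'n) 1" by simp
    then show "sphere (0::real^'n) 1 \<noteq> {}" by blast
    show "continuous_on (sphere 0 1) (\<lambda>x. norm (L x))"
      by (intro continuous_on_norm continuous_on_subset[OF L_cont]) auto
  qed
  then obtain x0 where x0: "norm x0 = 1" "\<And>y. norm y = 1 \<Longrightarrow> norm (L x0) \<le> norm (L y)" by auto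
  have "L x0 \<noteq> 0" using x0(1) by (metis R_L norm_zero zero_neq_one L_R R_scale scale_zero_left)
  then have m: "norm (L x0) > 0" by simp
  have "norm (L x0) * norm x \<le> norm (L x)" for x
  proof (cases "x = 0")
    case True then show ?thesis by simp
  next
    case False
    have "norm (L x0) \<le> norm (L ((1 / norm x) *\<^sub>R x))" by (rule x0(2)) (use False in simp)
    also have "\<dots> = norm (L x) / norm x" by (simp add: L_scale)
    finally show ?thesis using False by (simp add: field_simps)
  qed
  then show ?thesis using m by blast
qed

lemma R_bl: "bounded_linear R"
proof -
  obtain m where m: "m > 0" "\<And>x. m * norm x \<le> norm (L x)" using L_below by blast
  show ?thesis
  proof (rule bounded_linear_intro[of _ "1/m"])
    show "R (x + y) = R x + R y" for x y by (rule R_add)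
    show "R (r *\<^sub>R x) = r *\<^sub>R R x" for r x by (rule R_scale)
    show "norm (R x) \<le> norm x * (1 / m)" for x
      using m(2)[of "R x"] m(1) by (simp add: field_simps)
  qed
qed

lemma R_cont: "continuous_on UNIV R" using R_bl by (simp add: linear_continuous_on)

lemma L_meas[measurable]: "L \<in> borel_measurable borel"
  by (rule borel_measurable_continuous_onI[OF L_cont])
lemma R_meas[measurable]: "R \<in> borel_measurable borel"
  by (rule borel_measurable_continuous_onI[OF R_cont])

lemma vimage_R: "R -` A = L ` A"
  by (auto simp: image_iff) (metis L_R)

lemma vimage_L: "L -` A = R ` A"
  by (auto simp: image_iff) (metis R_L)

lemma det_eq: "det (matrix (\<lambda>x. R (A (L x)))) =
    (\<Sum>p\<in>{p. p permutes B}. of_int (sign p) * (\<Prod>b\<in>B. representation B (A b) (p b)))"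
  unfolding R_def L_def by (rule det_conj[OF indep spanB finB bij])

end



locale iso_wo = iso B e for B :: "'a::real_normed_vector set" and e :: "'n::{finite,wellorder} \<Rightarrow> 'a"
begin

definition ldet :: "('a \<Rightarrow> 'a) \<Rightarrow> real" where
  "ldet A = (\<Sum>p\<in>{p. p permutes B}. of_int (sign p) * (\<Prod>b\<in>B. representation B (A b) (p b)))"

lemma main_iso:
  fixes \<mu> :: "'a measure" and s :: "'a set" and f :: "'a \<Rightarrow> 'a" and f' :: "'a \<Rightarrow> 'a \<Rightarrow> 'a"
  assumes leb: "is_lebesgue_measure \<mu>"
    and s: "s \<in> sets borel"
    and inj: "inj_on f s"
    and der: "\<And>x. x \<in> s \<Longrightarrow> (f has_derivative f' x) (at x within s)"
  shows "(\<exists>g \<in> borel_measurable borel. AE x in \<mu>. x \<in> s \<longrightarrow> \<bar>ldet (f' x)\<bar> = g x)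
    \<and> outer_measure_of \<mu> (f ` s) = (\<integral>\<^sup>+ x. indicator s x * ennreal \<bar>ldet (f' x)\<bar> \<partial>\<mu>)"
proof -
  have s\<mu>: "sets \<mu> = sets borel" and tr: "\<And>a A. A \<in> sets borel \<Longrightarrow> emeasure \<mu> ((\<lambda>x. a + x) ` A) = emeasure \<mu> A"
    and cpt: "\<And>K. compact K \<Longrightarrow> emeasure \<mu> K < \<infinity>"
    using leb unfolding is_lebesgue_measure_def by auto
  have sp\<mu>: "space \<mu> = UNIV" using sets_eq_imp_space_eq[OF s\<mu>] by simp
  have R\<mu>[measurable]: "R \<in> \<mu> \<rightarrow>\<^sub>M borel"
    by (subst measurable_cong_sets[OF s\<mu> refl]) simp
  define \<nu> where "\<nu> = distr \<mu> borel R"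
  have s\<nu>: "sets \<nu> = sets borel" by (simp add: \<nu>_def)
  have LA: "A \<in> sets borel \<Longrightarrow> L ` A \<in> sets borel" for A
    using measurable_sets_borel[OF R_meas, of A] by (simp add: vimage_R)
  have em\<nu>: "A \<in> sets borel \<Longrightarrow> emeasure \<nu> A = emeasure \<mu> (L ` A)" for A
    unfolding \<nu>_def by (subst emeasure_distr[OF R\<mu>]) (auto simp: sp\<mu> vimage_R)
  have cmpL: "compact K \<Longrightarrow> compact (L ` K)" for K
    by (rule compact_continuous_image[OF continuous_on_subset[OF L_cont]]) auto
  have tr\<nu>: "emeasure \<nu> ((\<lambda>x. a + x) ` A) = emeasure \<nu> A" if A: "A \<in> sets borel" for a A
  proof -
    have eqA: "(\<lambda>x. a + x) ` A = (\<lambda>x. x - a) -` A"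
    proof (rule set_eqI)
      fix x :: "real^'n::{finite,wellorder}"
      have "x \<in> (\<lambda>x. a + x) ` A \<longleftrightarrow> (\<exists>y\<in>A. x = a + y)" by (simp add: image_iff)
      also have "\<dots> \<longleftrightarrow> x - a \<in> A" by (metis add_diff_cancel_left' diff_add_cancel add.commute)
      finally show "x \<in> (\<lambda>x. a + x) ` A \<longleftrightarrow> x \<in> (\<lambda>x. x - a) -` A" by simp
    qed
    have m: "(\<lambda>x::real^'n::{finite,wellorder}. x - a) \<in> borel_measurable borel" by measurable
    have "(\<lambda>x. a + x) ` A \<in> sets borel"
      unfolding eqA using measurable_sets_borel[OF m A] by simp
    then have "emeasure \<nu> ((\<lambda>x. a + x) ` A) = emeasure \<mu> (L ` (\<lambda>x. a + x) ` A)" by (rule em\<nu>)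
    also have "L ` (\<lambda>x. a + x) ` A = (\<lambda>y. L a + y) ` (L ` A)"
      by (auto simp: image_image L_add)
    also have "emeasure \<mu> \<dots> = emeasure \<mu> (L ` A)" by (rule tr[OF LA[OF A]])
    finally show ?thesis using em\<nu>[OF A] by simp
  qed
  have cpt\<nu>: "compact K \<Longrightarrow> emeasure \<nu> K < \<infinity>" for K
    using em\<nu>[of K] cpt[OF cmpL] by (simp add: compact_imp_closed borel_closed)
  define c where "c = emeasure \<nu> (cbox 0 One)"
  have lb1: "emeasure lborel (cbox (0::real^'n::{finite,wellorder}) One) = 1"
    by (simp add: emeasure_lborel_cbox_eq)
  have \<nu>c: "A \<in> sets borel \<Longrightarrow> emeasure \<nu> A = c * emeasure lborel A" for A
    using haar_unique[OF s\<nu> tr\<nu> cpt\<nu>, of A "cbox 0 One"] lb1 by (simp add: c_def)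
  have \<nu>dens: "\<nu> = density lborel (\<lambda>_. c)"
  proof (rule measure_eqI)
    show "sets \<nu> = sets (density lborel (\<lambda>_. c))" by (simp add: s\<nu>)
    fix A assume "A \<in> sets \<nu>"
    then have A: "A \<in> sets borel" using s\<nu> by simp
    show "emeasure \<nu> A = emeasure (density lborel (\<lambda>_. c)) A"
      using A by (simp add: \<nu>c emeasure_density nn_integral_cmult_indicator)
  qed
  have int\<nu>: "h \<in> borel_measurable borel \<Longrightarrow> (\<integral>\<^sup>+x. h x \<partial>\<nu>) = c * (\<integral>\<^sup>+x. h x \<partial>lborel)" for h
    unfolding \<nu>dens by (simp add: nn_integral_density nn_integral_cmult)

  define S where "S = L -` s"
  have Sb: "S \<in> sets borel" unfolding S_def using measurable_sets_borel[OF L_meas s] by simp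
  have Sl: "S \<in> sets lebesgue" using Sb by simp
  define g where "g = (\<lambda>x. R (f (L x)))"
  define g' where "g' = (\<lambda>x y. R (f' (L x) (L y)))"
  have der_g: "(g has_derivative g' x) (at x within S)" if x: "x \<in> S" for x
  proof -
    have h1: "((\<lambda>x. f (L x)) has_derivative (\<lambda>y. f' (L x) (L y))) (at x within S)"
      by (rule has_derivative_in_compose2[of s f f' L S x L])
        (use der x in \<open>auto simp: S_def intro: bounded_linear_imp_has_derivative[OF L_bl]\<close>)
    show ?thesis unfolding g_def g'_def
      by (rule has_derivative_compose[OF h1 bounded_linear_imp_has_derivative[OF R_bl]])
  qed
  have inj_g: "inj_on g S"
  proof (rule inj_onI)
    fix x y assume "x \<in> S" "y \<in> S" "g x = g y"
    then have "L (g x) = L (g y)" by simp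
    then have "f (L x) = f (L y)" by (simp add: g_def)
    then have "L x = L y" using inj \<open>x \<in> S\<close> \<open>y \<in> S\<close> unfolding S_def inj_on_def by auto
    then show "x = y" by (metis R_L)
  qed
  have detg: "det (matrix (g' x)) = ldet (f' (L x))" for x
    unfolding g'_def ldet_def by (rule det_eq)
  define X where "X = g ` S"
  have cov: "X \<in> sets lebesgue"
     "emeasure lebesgue X = (\<integral>\<^sup>+x. ennreal \<bar>det (matrix (g' x))\<bar> * indicator S x \<partial>lborel)"
    using cov_nn[OF Sl der_g inj_g] unfolding X_def by auto
  let ?F = "\<lambda>x. if x \<in> S then \<bar>det (matrix (g' x))\<bar> else 0"
  have Fm: "?F \<in> borel_measurable lebesgue" by (rule det_ae_borel[OF Sl der_g])
  obtain F' where F'[measurable]: "F' \<in> borel_measurable lborel" and ae: "AE x in lborel. ?F x = F' x"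
    using completion_ex_borel_measurable_real[OF Fm] by blast
  have F'b[measurable]: "F' \<in> borel_measurable borel" using F' by simp
  obtain N where N: "{x \<in> space lborel. \<not> ?F x = F' x} \<subseteq> N" "emeasure lborel N = 0" "N \<in> sets lborel"
    using ae by (rule AE_E)
  define G where "G = (\<lambda>y. F' (R y))"
  have Gb: "G \<in> borel_measurable borel" unfolding G_def by measurable
  have RS: "R y \<in> S \<longleftrightarrow> y \<in> s" for y by (simp add: S_def)
  have ae\<mu>: "AE y in \<mu>. y \<in> s \<longrightarrow> \<bar>ldet (f' y)\<bar> = G y"
  proof (rule AE_I')
    show "L ` N \<in> null_sets \<mu>"
      using em\<nu>[of N] \<nu>c[of N] N LA[of N] s\<mu> by (auto simp: null_sets_def)
    show "{y \<in> space \<mu>. \<not> (y \<in> s \<longrightarrow> \<bar>ldet (f' y)\<bar> = G y)} \<subseteq> L ` N"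
    proof
      fix y assume "y \<in> {y \<in> space \<mu>. \<not> (y \<in> s \<longrightarrow> \<bar>ldet (f' y)\<bar> = G y)}"
      then have y: "y \<in> s" "\<bar>ldet (f' y)\<bar> \<noteq> G y" by auto
      have "?F (R y) = \<bar>ldet (f' y)\<bar>" using y(1) RS by (simp add: detg)
      then have "?F (R y) \<noteq> F' (R y)" using y(2) by (simp add: G_def)
      then have "R y \<in> N" using N(1) by auto
      then show "y \<in> L ` N" by (metis L_R imageI)
    qed
  qed
  have part1: "\<exists>g \<in> borel_measurable borel. AE x in \<mu>. x \<in> s \<longrightarrow> \<bar>ldet (f' x)\<bar> = g x"
    using Gb ae\<mu> by blast
  note Sb[measurable]
  have hm: "(\<lambda>x. indicator S x * ennreal (F' x)) \<in> borel_measurable borel" by measurable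
  have hm': "(\<lambda>x. indicator S x * ennreal (F' x)) \<in> borel_measurable (distr \<mu> borel R)"
    using hm by (simp add: measurable_cong_sets[OF sets_distr refl])
  have "(\<integral>\<^sup>+ y. indicator s y * ennreal \<bar>ldet (f' y)\<bar> \<partial>\<mu>) = (\<integral>\<^sup>+ y. indicator s y * ennreal (G y) \<partial>\<mu>)"
    by (rule nn_integral_cong_AE) (use ae\<mu> in \<open>eventually_elim, auto simp: indicator_def\<close>)
  also have "\<dots> = (\<integral>\<^sup>+ y. indicator S (R y) * ennreal (F' (R y)) \<partial>\<mu>)"
    by (rule nn_integral_cong) (simp add: RS G_def indicator_def)
  also have "\<dots> = (\<integral>\<^sup>+ x. indicator S x * ennreal (F' x) \<partial>\<nu>)"
    unfolding \<nu>_def by (simp add: nn_integral_distr[OF R\<mu> hm'])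
  also have "\<dots> = c * (\<integral>\<^sup>+ x. indicator S x * ennreal (F' x) \<partial>lborel)"
    by (intro int\<nu> hm)
  also have "(\<integral>\<^sup>+ x. indicator S x * ennreal (F' x) \<partial>lborel)
      = (\<integral>\<^sup>+x. ennreal \<bar>det (matrix (g' x))\<bar> * indicator S x \<partial>lborel)"
    by (rule nn_integral_cong_AE) (use ae in \<open>eventually_elim, auto simp: indicator_def\<close>)
  also have "\<dots> = emeasure lebesgue X" using cov(2) by simp
  finally have rhs: "(\<integral>\<^sup>+ y. indicator s y * ennreal \<bar>ldet (f' y)\<bar> \<partial>\<mu>) = c * emeasure lebesgue X" .
  have RX: "y \<in> f ` s \<Longrightarrow> R y \<in> X" for y
    unfolding X_def g_def S_def by (auto simp: image_iff intro!: bexI[of _ "R x" for x])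
  have XL: "x \<in> X \<Longrightarrow> L x \<in> f ` s" for x
    unfolding X_def g_def S_def by auto
  have \<mu>T: "T \<in> sets borel \<Longrightarrow> emeasure \<mu> T = c * emeasure lborel (L -` T)" for T
  proof -
    assume T: "T \<in> sets borel"
    have "L -` T \<in> sets borel" using measurable_sets_borel[OF L_meas T] by simp
    moreover have "L ` (L -` T) = T" by (auto simp: image_iff) (metis L_R)
    ultimately show ?thesis using em\<nu>[of "L -` T"] \<nu>c[of "L -` T"] by simp
  qed
  have lhs: "outer_measure_of \<mu> (f ` s) = c * emeasure lebesgue X"
  proof (rule antisym)
    obtain T0 where T0: "T0 \<in> sets lborel" "X \<subseteq> T0" "emeasure lebesgue X = emeasure lborel T0"
      using completion_upper[OF cov(1)] by blast
    have T0b: "T0 \<in> sets borel" using T0 by simp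
    have "f ` s \<subseteq> L ` T0" using RX T0(2) by (auto simp: image_iff) (metis L_R subsetD)
    moreover have "L ` T0 \<in> sets \<mu>" using LA[OF T0b] s\<mu> by simp
    ultimately have "outer_measure_of \<mu> (f ` s) \<le> emeasure \<mu> (L ` T0)"
      unfolding outer_measure_of_def by (intro INF_lower) auto
    also have "\<dots> = c * emeasure lborel T0"
      using \<mu>T[OF LA[OF T0b]] by (simp add: vimage_L image_image)
    finally show "outer_measure_of \<mu> (f ` s) \<le> c * emeasure lebesgue X" using T0 by simp
  next
    show "c * emeasure lebesgue X \<le> outer_measure_of \<mu> (f ` s)"
      unfolding outer_measure_of_def
    proof (rule INF_greatest)
      fix T assume "T \<in> {B \<in> sets \<mu>. f ` s \<subseteq> B}"
      then have T: "T \<in> sets borel" "f ` s \<subseteq> T" using s\<mu> by auto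
      have LT: "L -` T \<in> sets borel" using measurable_sets_borel[OF L_meas T(1)] by simp
      have "X \<subseteq> L -` T" using XL T(2) by auto
      then have "emeasure lebesgue X \<le> emeasure lebesgue (L -` T)"
        using LT by (intro emeasure_mono) auto
      also have "\<dots> = emeasure lborel (L -` T)" using LT by simp
      finally show "c * emeasure lebesgue X \<le> emeasure \<mu> T"
        using \<mu>T[OF T(1)] by (simp add: mult_left_mono)
    qed
  qed
  show ?thesis using part1 lhs rhs by simp
qed

end



theorem mainTheorem3:
  fixes \<mu> :: "'a::real_normed_vector measure"
    and s :: "'a set" and f :: "'a \<Rightarrow> 'a" and f' :: "'a \<Rightarrow> 'a \<Rightarrow> 'a"
  assumes "fin_dim_space TYPE('a)"
    and "is_lebesgue_measure \<mu>"
    and "s \<in> sets borel"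
    and "inj_on f s"
    and "\<And>x. bounded_linear (f' x)"
    and "\<And>x. x \<in> s \<Longrightarrow> (f has_derivative f' x) (at x within s)"
  shows "(\<exists>g \<in> borel_measurable borel. AE x in \<mu>. x \<in> s \<longrightarrow> \<bar>lin_det (f' x)\<bar> = g x)
    \<and> outer_measure_of \<mu> (f ` s) = (\<integral>\<^sup>+ x. indicator s x * ennreal \<bar>lin_det (f' x)\<bar> \<partial>\<mu>)"
proof -
  have finB: "finite (bas::'a set)" by (rule bas_finite[OF assms(1)])
  show ?thesis
  proof (cases "card (bas::'a set) = 0")
    case False
    have "card (UNIV :: 'a idx set) = card (bas::'a set)"
      using False by (simp add: card_idx)
    then obtain e :: "'a idx \<Rightarrow> 'a" where e: "bij_betw e UNIV bas"
      using finite_same_card_bij[OF finite[of "UNIV :: 'a idx set"] finB] by blast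
    interpret iso_wo bas e
      by unfold_locales (use bas finB e in auto)
    have ld: "ldet = lin_det" by (simp add: fun_eq_iff ldet_def lin_det_bas)
    show ?thesis using main_iso[OF assms(2,3,4,6)] unfolding ld .
  next
    case True
    then have "bas = ({}::'a set)" using finB by simp
    then have z: "(x::'a) = 0" for x using bas[where 'a='a] by auto
    have ld: "lin_det A = 1" for A :: "'a \<Rightarrow> 'a"
      by (simp add: lin_det_bas \<open>bas = {}\<close>)
    have s\<mu>: "sets \<mu> = sets borel" using assms(2) unfolding is_lebesgue_measure_def by auto
    have fs: "f ` s = s"
    proof (cases "s = {}")
      case False
      then obtain x0 where "x0 \<in> s" by blast
      show ?thesis
      proof
        show "f ` s \<subseteq> s" using \<open>x0 \<in> s\<close> z[of "f _"] z[of x0] by auto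
        show "s \<subseteq> f ` s"
        proof
          fix y assume "y \<in> s"
          have "y = f x0" using z[of y] z[of "f x0"] by simp
          then show "y \<in> f ` s" using \<open>x0 \<in> s\<close> by blast
        qed
      qed
    qed simp
    have "outer_measure_of \<mu> (f ` s) = emeasure \<mu> s"
      using fs assms(3) s\<mu> by simp
    also have "\<dots> = (\<integral>\<^sup>+ x. indicator s x * ennreal \<bar>lin_det (f' x)\<bar> \<partial>\<mu>)"
      using assms(3) s\<mu> by (simp add: ld)
    finally show ?thesis
      by (intro conjI bexI[of _ "\<lambda>_. 1"]) (auto simp: ld)
  qed
qed


end
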